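(* Let $s,t,D\ge1$ be integers and let $\mathcal G=\{G_1,\dots,G_t\}$ be an $s$-joined graph family on vertex set $V$; write $U=V\times[t]$. Suppose $Y_0\subseteq V$ satisfies $|Y_0|\ge3sD+4s$. Then there exists $U_0\subseteq U$ with $|U_0|\le s$ such that every $X\subseteq U\setminus U_0$ with $|X|\le2s$ satisfies $|N^*(X,Y_0\setminus U_0|_V)|\ge D|X|$.
   Context: A graph family $\mathcal G=\{G_1,\dots,G_t\}$ is a collection of $t$ simple graphs on a common finite vertex set $V$. For $X\subseteq V\times[t]$, $\Gamma_{\mathcal G}(X)=\bigcup_{(v,i)\in X}\{u\in V:uv\in E(G_i)\}$. The family is $s$-joined if for all $X\subseteq V\times[t]$ and $Y\subseteq V$ with $|X|\ge s$ and $|Y|\ge s$ there exist $(v,i)\in X$ and $y\in Y$ with $vy\in E(G_i)$. For $X\subseteq V\times[t]$, $X|_V=\{v\in V:(v,i)\in X\text{ for some }i\}$, and for $Y\subseteq V$, $N^*(X,Y)=(\Gamma_{\mathcal G}(X)\cap Y)\setminus X|_V$. *)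

theory Defs
  imports Main
begin

definition graph_family :: "'a set \<Rightarrow> nat \<Rightarrow> (nat \<Rightarrow> 'a \<Rightarrow> 'a \<Rightarrow> bool) \<Rightarrow> bool" where
  "graph_family V t E \<longleftrightarrow> finite V \<and>
     (\<forall>i\<in>{1..t}. (\<forall>u v. E i u v \<longrightarrow> E i v u) \<and> (\<forall>u. \<not> E i u u)
                  \<and> (\<forall>u v. E i u v \<longrightarrow> u \<in> V \<and> v \<in> V))"

definition Gamma :: "'a set \<Rightarrow> (nat \<Rightarrow> 'a \<Rightarrow> 'a \<Rightarrow> bool) \<Rightarrow> ('a \<times> nat) set \<Rightarrow> 'a set" where
  "Gamma V E X = {u \<in> V. \<exists>(v,i)\<in>X. E i u v}"

definition s_joined :: "'a set \<Rightarrow> nat \<Rightarrow> (nat \<Rightarrow> 'a \<Rightarrow> 'a \<Rightarrow> bool) \<Rightarrow> nat \<Rightarrow> bool" where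
  "s_joined V t E s \<longleftrightarrow>
     (\<forall>X Y. X \<subseteq> V \<times> {1..t} \<and> Y \<subseteq> V \<and> card X \<ge> s \<and> card Y \<ge> s \<longrightarrow>
        (\<exists>(v,i)\<in>X. \<exists>y\<in>Y. E i v y))"

definition restrV :: "('a \<times> nat) set \<Rightarrow> 'a set" where
  "restrV X = fst ` X"

definition Nstar :: "'a set \<Rightarrow> (nat \<Rightarrow> 'a \<Rightarrow> 'a \<Rightarrow> bool) \<Rightarrow> ('a \<times> nat) set \<Rightarrow> 'a set \<Rightarrow> 'a set" where
  "Nstar V E X Y = (Gamma V E X \<inter> Y) - restrV X"

end

theory Submission
  imports Defs
begin

lemma Nstar_union:
  "Nstar V E (X \<union> W) Y0 \<subseteq> Nstar V E X (Y0 - restrV W) \<union> Nstar V E W Y0"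
  unfolding Nstar_def Gamma_def restrV_def by auto

lemma Nstar_lower:
  assumes gf: "graph_family V t E" and sj: "s_joined V t E s"
    and W: "W \<subseteq> V \<times> {1..t}" and cW: "card W \<ge> s" and s1: "s \<ge> 1"
    and Y0: "Y0 \<subseteq> V"
  shows "card Y0 \<le> card (Nstar V E W Y0) + (s - 1) + card W"
proof -
  have fV: "finite V" using gf unfolding graph_family_def by auto
  have fW: "finite W" using W fV by (meson finite_SigmaI finite_atLeastAtMost finite_subset)
  define Y where "Y = Y0 - Gamma V E W"
  have fY0: "finite Y0" using Y0 fV finite_subset by auto
  have cY: "card Y \<le> s - 1"
  proof (rule ccontr)
    assume "\<not> card Y \<le> s - 1"
    hence cs: "card Y \<ge> s" by simp
    have YV: "Y \<subseteq> V" using Y0 Y_def by auto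
    have "\<exists>(v,i)\<in>W. \<exists>y\<in>Y. E i v y"
      using sj W YV cW cs unfolding s_joined_def by blast
    then obtain v i y where vi: "(v,i) \<in> W" and y: "y \<in> Y" and e: "E i v y"
      by blast
    have "i \<in> {1..t}" using vi W by auto
    hence "E i y v" using gf e unfolding graph_family_def by blast
    hence "y \<in> Gamma V E W" using y Y0 vi unfolding Gamma_def Y_def by blast
    thus False using y Y_def by blast
  qed
  have cr: "card (restrV W) \<le> card W" unfolding restrV_def by (rule card_image_le[OF fW])
  have sub: "Y0 \<subseteq> (Nstar V E W Y0 \<union> Y) \<union> restrV W"
    unfolding Nstar_def Y_def by auto
  have fin: "finite ((Nstar V E W Y0 \<union> Y) \<union> restrV W)"
    using fY0 fW unfolding Nstar_def restrV_def Y_def by auto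
  have "card Y0 \<le> card ((Nstar V E W Y0 \<union> Y) \<union> restrV W)"
    by (rule card_mono[OF fin sub])
  also have "\<dots> \<le> card (Nstar V E W Y0 \<union> Y) + card (restrV W)" by (rule card_Un_le)
  also have "\<dots> \<le> card (Nstar V E W Y0) + card Y + card (restrV W)"
    using card_Un_le[of "Nstar V E W Y0" Y] by simp
  finally show ?thesis using cY cr by linarith
qed

theorem proposition3p1:
  fixes V :: "'a set" and E :: "nat \<Rightarrow> 'a \<Rightarrow> 'a \<Rightarrow> bool"
    and s t D :: nat and Y0 :: "'a set"
  assumes "s \<ge> 1" and "t \<ge> 1" and "D \<ge> 1"
    and "graph_family V t E"
    and "s_joined V t E s"
    and "Y0 \<subseteq> V"
    and "card Y0 \<ge> 3 * s * D + 4 * s"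
  shows "\<exists>U0 \<subseteq> V \<times> {1..t}. card U0 \<le> s \<and>
           (\<forall>X. X \<subseteq> (V \<times> {1..t}) - U0 \<and> card X \<le> 2 * s \<longrightarrow>
                card (Nstar V E X (Y0 - restrV U0)) \<ge> D * card X)"
proof -
  let ?U = "V \<times> {1..t}"
  have fV: "finite V" using assms(4) unfolding graph_family_def by auto
  have fU: "finite ?U" using fV by simp
  define P where "P W \<longleftrightarrow> W \<subseteq> ?U \<and> card W < s \<and> card (Nstar V E W Y0) \<le> D * card W" for W
  have P0: "P {}" unfolding P_def Nstar_def Gamma_def using assms(1) by simp
  obtain U0 where PU0: "P U0" and mx: "\<And>W. P W \<Longrightarrow> card W \<le> card U0"
    using ex_has_greatest_nat[of P "{}" card s, OF P0] unfolding P_def by blast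
  have U0: "U0 \<subseteq> ?U" "card U0 < s" "card (Nstar V E U0 Y0) \<le> D * card U0"
    using PU0 unfolding P_def by auto
  have fU0: "finite U0" using U0(1) fU finite_subset by blast
  show ?thesis
  proof (intro exI[of _ U0] conjI allI impI)
    show "U0 \<subseteq> ?U" "card U0 \<le> s" using U0 by auto
    fix X assume X: "X \<subseteq> ?U - U0 \<and> card X \<le> 2 * s"
    have fX: "finite X" using X fU finite_subset by blast
    show "card (Nstar V E X (Y0 - restrV U0)) \<ge> D * card X"
    proof (rule ccontr)
      assume nc: "\<not> ?thesis"
      let ?W = "X \<union> U0"
      have cW: "card ?W = card X + card U0"
        using X fX fU0 by (subst card_Un_disjoint) auto
      have fN: "finite (Nstar V E X (Y0 - restrV U0))" "finite (Nstar V E U0 Y0)"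
        using fV unfolding Nstar_def Gamma_def by auto
      have "card (Nstar V E ?W Y0) \<le> card (Nstar V E X (Y0 - restrV U0) \<union> Nstar V E U0 Y0)"
        by (rule card_mono[OF _ Nstar_union]) (use fN in auto)
      also have "\<dots> \<le> card (Nstar V E X (Y0 - restrV U0)) + card (Nstar V E U0 Y0)"
        by (rule card_Un_le)
      finally have le1: "card (Nstar V E ?W Y0) \<le> card (Nstar V E X (Y0 - restrV U0)) + card (Nstar V E U0 Y0)" .
      have dW: "D * card ?W = D * card X + D * card U0" using cW by (simp add: distrib_left)
      have lt: "card (Nstar V E ?W Y0) < D * card ?W"
        using le1 nc U0(3) dW by linarith
      have WU: "?W \<subseteq> ?U" using X U0(1) by auto
      show False
      proof (cases "card ?W < s")
        case True
        hence "P ?W" using WU lt unfolding P_def by simp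
        hence "card ?W \<le> card U0" by (rule mx)
        hence "card X = 0" using cW by simp
        thus False using nc by simp
      next
        case False
        hence lo: "card Y0 \<le> card (Nstar V E ?W Y0) + (s - 1) + card ?W"
          using Nstar_lower[OF assms(4) assms(5) WU _ assms(1) assms(6)] by simp
        have cw3: "card ?W \<le> 3 * s - 1" using cW X U0(2) by linarith
        have "D * card ?W \<le> D * (3 * s - 1)" using cw3 by simp
        also have "\<dots> = 3 * s * D - D" by (simp add: algebra_simps diff_mult_distrib2)
        finally have "D * card ?W \<le> 3 * s * D - D" .
        moreover have "3 * s * D \<ge> D" using assms(1) by simp
        ultimately show False using lo lt cw3 assms(7) assms(1) assms(3) by linarith
      qed
    qed
  qed
qed

end
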